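(* Let $n\ge2$, $\Gamma_n=\langle c,\mu\mid c^n\mu^{-3}c^n\mu^{-1}=1\rangle$ (the fundamental group of the 3-manifold $M_n$ obtained by gluing the exterior of the $(2,2n)$-torus link to the orientable $I$-bundle over the Klein bottle, with peripheral subgroup $\langle\mu^{-2}c,c^n\rangle$), and for $k=1,\dots,n-1$ let $Y_k=\{t_\mu=0,\ t_c=2\cos(\pi k/n)\}$ in the coordinates $(t_c,t_\mu,t_{c\mu})$ of $X(\Gamma_n,\mathrm{SL}_2(\mathbb C))$. Then the character scheme $X(\Gamma_n,\mathrm{SL}_2(\mathbb C))$ is non-reduced at every point of $Y_k$, for every $k=1,\dots,n-1$.
   Context: $X(\Gamma,\mathrm{SL}_2(\mathbb C))=(\mathrm{Spm}\,B(\Gamma),B(\Gamma))$ is the character scheme, with $B(\Gamma)$ the conjugation invariants of the universal $\mathrm{SL}_2(\mathbb C)$-representation algebra; a point is non-reduced if the local ring of $B(\Gamma)$ at the corresponding maximal ideal has nonzero nilpotents. $t_\gamma$ denotes the trace function of $\gamma$. *)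

theory Defs
  imports Complex_Main "HOL-Library.Poly_Mapping"
begin

type_synonym cpoly = "(nat \<Rightarrow>\<^sub>0 nat) \<Rightarrow>\<^sub>0 complex"

definition pconst :: "complex \<Rightarrow> cpoly" where
  "pconst c = Poly_Mapping.single 0 c"

definition pvar :: "nat \<Rightarrow> cpoly" where
  "pvar i = Poly_Mapping.single (Poly_Mapping.single i 1) 1"

definition psubst :: "(nat \<Rightarrow> cpoly) \<Rightarrow> cpoly \<Rightarrow> cpoly" where
  "psubst \<sigma> p = (\<Sum>m\<in>Poly_Mapping.keys p.
      pconst (Poly_Mapping.lookup p m) *
      (\<Prod>i\<in>Poly_Mapping.keys m. \<sigma> i ^ Poly_Mapping.lookup m i))"

definition peval :: "(nat \<Rightarrow> complex) \<Rightarrow> cpoly \<Rightarrow> complex" where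
  "peval x p = (\<Sum>m\<in>Poly_Mapping.keys p.
      Poly_Mapping.lookup p m * (\<Prod>i\<in>Poly_Mapping.keys m. x i ^ Poly_Mapping.lookup m i))"

section \<open>2x2 matrices over a commutative ring, as tuples (a11, a12, a21, a22)\<close>

type_synonym 'a m2 = "'a \<times> 'a \<times> 'a \<times> 'a"

fun m2mul :: "'a::comm_ring_1 m2 \<Rightarrow> 'a m2 \<Rightarrow> 'a m2" where
  "m2mul (a,b,c,d) (e,f,g,h) = (a*e + b*g, a*f + b*h, c*e + d*g, c*f + d*h)"

definition m2id :: "'a::comm_ring_1 m2" where
  "m2id = (1, 0, 0, 1)"

fun m2det :: "'a::comm_ring_1 m2 \<Rightarrow> 'a" where
  "m2det (a,b,c,d) = a*d - b*c"

fun m2tr :: "'a::comm_ring_1 m2 \<Rightarrow> 'a" where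
  "m2tr (a,b,c,d) = a + d"

text \<open>Adjugate; equals the inverse for determinant-one matrices.\<close>
fun m2adj :: "'a::comm_ring_1 m2 \<Rightarrow> 'a m2" where
  "m2adj (a,b,c,d) = (d, -b, -c, a)"

fun m2pow :: "'a::comm_ring_1 m2 \<Rightarrow> nat \<Rightarrow> 'a m2" where
  "m2pow A 0 = m2id"
| "m2pow A (Suc k) = m2mul A (m2pow A k)"

fun m2list :: "'a m2 \<Rightarrow> 'a list" where
  "m2list (a,b,c,d) = [a,b,c,d]"

definition matC :: "cpoly m2" where
  "matC = (pvar 0, pvar 1, pvar 2, pvar 3)"

definition matMu :: "cpoly m2" where
  "matMu = (pvar 4, pvar 5, pvar 6, pvar 7)"

definition relword :: "nat \<Rightarrow> 'a::comm_ring_1 m2 \<Rightarrow> 'a m2 \<Rightarrow> 'a m2" where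
  "relword n A B = m2mul (m2pow A n) (m2mul (m2pow (m2adj B) 3)
                     (m2mul (m2pow A n) (m2adj B)))"

text \<open>Generators of the defining ideal J_n of the universal representation algebra
  A(Gamma_n) = C[x0..x7] / J_n.\<close>
definition relgens :: "nat \<Rightarrow> cpoly list" where
  "relgens n = [m2det matC - 1, m2det matMu - 1] @
     map2 (-) (m2list (relword n matC matMu)) (m2list (m2id :: cpoly m2))"

definition inJ :: "nat \<Rightarrow> cpoly \<Rightarrow> bool" where
  "inJ n f \<longleftrightarrow> (\<exists>q :: nat \<Rightarrow> cpoly.
      f = (\<Sum>i<length (relgens n). q i * relgens n ! i))"

definition conjsubst :: "complex m2 \<Rightarrow> nat \<Rightarrow> cpoly" where
  "conjsubst g i =
     (let G = (case g of (a,b,c,d) \<Rightarrow> (pconst a, pconst b, pconst c, pconst d));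
          A' = m2mul G (m2mul matC (m2adj G));
          B' = m2mul G (m2mul matMu (m2adj G))
      in if i < 4 then m2list A' ! i else if i < 8 then m2list B' ! (i - 4) else pvar i)"

text \<open>Representatives of elements of B(Gamma_n) = A(Gamma_n)^{SL2(C)}:
  polynomials whose class modulo J_n is conjugation invariant.\<close>
definition inB :: "nat \<Rightarrow> cpoly \<Rightarrow> bool" where
  "inB n f \<longleftrightarrow> (\<forall>g. m2det g = 1 \<longrightarrow> inJ n (psubst (conjsubst g) f - f))"

definition is_rep :: "nat \<Rightarrow> complex m2 \<Rightarrow> complex m2 \<Rightarrow> bool" where
  "is_rep n A B \<longleftrightarrow> m2det A = 1 \<and> m2det B = 1 \<and> relword n A B = m2id"

definition coords :: "complex m2 \<Rightarrow> complex m2 \<Rightarrow> nat \<Rightarrow> complex" where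
  "coords A B i = (if i < 4 then m2list A ! i else if i < 8 then m2list B ! (i - 4) else 0)"

text \<open>The maximal ideal of B(Gamma_n) of the point (character) of rho = (A,B):
  invariants vanishing at rho.\<close>
definition in_maxideal :: "nat \<Rightarrow> complex m2 \<Rightarrow> complex m2 \<Rightarrow> cpoly \<Rightarrow> bool" where
  "in_maxideal n A B f \<longleftrightarrow> inB n f \<and> peval (coords A B) f = 0"

text \<open>The local ring B(Gamma_n)_m at the point of rho has a nonzero nilpotent:
  some f in B has f/1 nonzero (no s outside m kills f) but f^N/1 = 0
  (some s outside m kills f^N).\<close>
definition nonreduced_at :: "nat \<Rightarrow> complex m2 \<Rightarrow> complex m2 \<Rightarrow> bool" where
  "nonreduced_at n A B \<longleftrightarrow> (\<exists>f. inB n f \<and>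
      (\<forall>s. inB n s \<and> \<not> in_maxideal n A B s \<longrightarrow> \<not> inJ n (s * f)) \<and>
      (\<exists>N s. inB n s \<and> \<not> in_maxideal n A B s \<and> inJ n (s * f ^ N)))"

end

theory Submission
  imports Defs
begin


definition ev :: "(complex \<Rightarrow> 'a::comm_ring_1) \<Rightarrow> (nat \<Rightarrow> 'a) \<Rightarrow> cpoly \<Rightarrow> 'a" where
  "ev emb x p = (\<Sum>m\<in>Poly_Mapping.keys p.
      emb (Poly_Mapping.lookup p m) * (\<Prod>i\<in>Poly_Mapping.keys m. x i ^ Poly_Mapping.lookup m i))"

definition mon :: "(nat \<Rightarrow> 'a::comm_ring_1) \<Rightarrow> (nat \<Rightarrow>\<^sub>0 nat) \<Rightarrow> 'a" where
  "mon x m = (\<Prod>i\<in>Poly_Mapping.keys m. x i ^ Poly_Mapping.lookup m i)"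

definition rhom :: "('a::comm_ring_1 \<Rightarrow> 'b::comm_ring_1) \<Rightarrow> bool" where
  "rhom h \<longleftrightarrow> h 0 = 0 \<and> h 1 = 1 \<and> (\<forall>a b. h (a + b) = h a + h b) \<and> (\<forall>a b. h (a * b) = h a * h b)"

lemma rhom_0: "rhom h \<Longrightarrow> h 0 = 0" by (simp add: rhom_def)
lemma rhom_1: "rhom h \<Longrightarrow> h 1 = 1" by (simp add: rhom_def)
lemma rhom_add: "rhom h \<Longrightarrow> h (a + b) = h a + h b" by (simp add: rhom_def)
lemma rhom_mult: "rhom h \<Longrightarrow> h (a * b) = h a * h b" by (simp add: rhom_def)
lemma rhom_uminus: "rhom h \<Longrightarrow> h (- a) = - h a"
proof -
  assume h: "rhom h"
  have "h (- a) + h a = 0" using rhom_add[OF h, of "-a" a] rhom_0[OF h] by simp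
  then show ?thesis by (simp add: eq_neg_iff_add_eq_0)
qed
lemma rhom_diff: "rhom h \<Longrightarrow> h (a - b) = h a - h b"
  using rhom_add[of h a "-b"] rhom_uminus[of h b] by simp
lemma rhom_power: "rhom h \<Longrightarrow> h (a ^ k) = h a ^ k"
  by (induct k) (simp_all add: rhom_1 rhom_mult)
lemma rhom_sum: "rhom h \<Longrightarrow> h (sum f S) = (\<Sum>i\<in>S. h (f i))"
  by (induct S rule: infinite_finite_induct) (simp_all add: rhom_0 rhom_add)
lemma rhom_prod: "rhom h \<Longrightarrow> h (prod f S) = (\<Prod>i\<in>S. h (f i))"
  by (induct S rule: infinite_finite_induct) (simp_all add: rhom_1 rhom_mult)
lemma rhom_of_nat: "rhom h \<Longrightarrow> h (of_nat k) = of_nat k"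
  by (induct k) (simp_all add: rhom_0 rhom_1 rhom_add)
lemma rhom_comp: "rhom h \<Longrightarrow> rhom g \<Longrightarrow> rhom (g \<circ> h)"
  by (simp add: rhom_def)
lemma rhom_id: "rhom id" by (simp add: rhom_def)

lemma ev_mon: "ev emb x p = (\<Sum>m\<in>Poly_Mapping.keys p. emb (Poly_Mapping.lookup p m) * mon x m)"
  by (simp add: ev_def mon_def)

lemma mon_superset:
  assumes "finite S" "Poly_Mapping.keys m \<subseteq> S"
  shows "mon x m = (\<Prod>i\<in>S. x i ^ Poly_Mapping.lookup m i)"
  unfolding mon_def
  by (rule prod.mono_neutral_left) (use assms in \<open>auto simp: in_keys_iff\<close>)

lemma mon_add: "mon x (m1 + m2) = mon x m1 * mon x m2"
proof -
  let ?S = "Poly_Mapping.keys m1 \<union> Poly_Mapping.keys m2"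
  have f: "finite ?S" by simp
  have "mon x (m1 + m2) = (\<Prod>i\<in>?S. x i ^ Poly_Mapping.lookup (m1 + m2) i)"
    by (rule mon_superset[OF f]) (simp add: keys_add)
  also have "\<dots> = (\<Prod>i\<in>?S. x i ^ Poly_Mapping.lookup m1 i * x i ^ Poly_Mapping.lookup m2 i)"
    by (simp add: lookup_add power_add)
  also have "\<dots> = mon x m1 * mon x m2"
    by (simp add: prod.distrib mon_superset[OF f])
  finally show ?thesis .
qed

lemma mon_zero: "mon x 0 = 1" by (simp add: mon_def)

lemma ev_superset:
  assumes "finite S" "Poly_Mapping.keys p \<subseteq> S" "emb 0 = 0"
  shows "ev emb x p = (\<Sum>m\<in>S. emb (Poly_Mapping.lookup p m) * mon x m)"
  unfolding ev_mon
  by (rule sum.mono_neutral_left) (use assms in \<open>auto simp: in_keys_iff\<close>)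

lemma ev_add: "rhom emb \<Longrightarrow> ev emb x (p + q) = ev emb x p + ev emb x q"
  unfolding ev_mon
  by (rule setsum_keys_plus_distrib) (simp_all add: rhom_0 rhom_add distrib_right)

lemma ev_0: "ev emb x 0 = 0" by (simp add: ev_def)

lemma ev_sum: "rhom emb \<Longrightarrow> ev emb x (sum f S) = (\<Sum>i\<in>S. ev emb x (f i))"
  by (induct S rule: infinite_finite_induct) (simp_all add: ev_0 ev_add)

lemma ev_single: "rhom emb \<Longrightarrow> ev emb x (Poly_Mapping.single m c) = emb c * mon x m"
  by (simp add: ev_mon rhom_0)

lemma pm_expand: "p = (\<Sum>m\<in>Poly_Mapping.keys p. Poly_Mapping.single m (Poly_Mapping.lookup p m))"
proof (rule poly_mapping_eqI)
  fix k
  show "Poly_Mapping.lookup p k = Poly_Mapping.lookup (\<Sum>m\<in>Poly_Mapping.keys p. Poly_Mapping.single m (Poly_Mapping.lookup p m)) k"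
    by (simp add: lookup_sum lookup_single when_def in_keys_iff)
qed

lemma ev_mult: assumes h: "rhom emb" shows "ev emb x (p * q) = ev emb x p * ev emb x q"
proof -
  let ?sp = "\<lambda>m. Poly_Mapping.single m (Poly_Mapping.lookup p m)"
  let ?sq = "\<lambda>m. Poly_Mapping.single m (Poly_Mapping.lookup q m)"
  have "p * q = (\<Sum>m\<in>Poly_Mapping.keys p. ?sp m) * (\<Sum>m\<in>Poly_Mapping.keys q. ?sq m)"
    using pm_expand[of p] pm_expand[of q] by simp
  also have "\<dots> = (\<Sum>m\<in>Poly_Mapping.keys p. \<Sum>m'\<in>Poly_Mapping.keys q. ?sp m * ?sq m')"
    by (simp add: sum_product)
  finally have pq: "p * q = \<dots>" .
  have "ev emb x (p * q) = (\<Sum>m\<in>Poly_Mapping.keys p. \<Sum>m'\<in>Poly_Mapping.keys q. ev emb x (?sp m * ?sq m'))"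
    by (simp add: pq ev_sum[OF h])
  also have "\<dots> = (\<Sum>m\<in>Poly_Mapping.keys p. \<Sum>m'\<in>Poly_Mapping.keys q. 
      (emb (Poly_Mapping.lookup p m) * mon x m) * (emb (Poly_Mapping.lookup q m') * mon x m'))"
    by (simp add: mult_single ev_single[OF h] rhom_mult[OF h] mon_add mult_ac)
  also have "\<dots> = ev emb x p * ev emb x q"
    by (simp add: ev_mon sum_product)
  finally show ?thesis .
qed

lemma ev_1: "rhom emb \<Longrightarrow> ev emb x 1 = 1"
proof -
  assume h: "rhom emb"
  have "(1::cpoly) = Poly_Mapping.single 0 1" by simp
  then show ?thesis by (metis ev_single[OF h] mon_zero rhom_1[OF h] mult_1)
qed

lemma rhom_ev: "rhom emb \<Longrightarrow> rhom (ev emb x)"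
  by (simp add: rhom_def ev_0 ev_1 ev_add ev_mult)

lemma ev_pvar: "rhom emb \<Longrightarrow> ev emb x (pvar i) = x i"
  by (simp add: pvar_def ev_single rhom_1 mon_def)

lemma ev_pconst: "rhom emb \<Longrightarrow> ev emb x (pconst c) = emb c"
  by (simp add: pconst_def ev_single mon_zero)

lemma rhom_pconst: "rhom pconst"
  by (simp add: rhom_def pconst_def single_add mult_single)

lemma peval_ev: "peval x = ev id x"
  by (simp add: fun_eq_iff peval_def ev_def)

lemma psubst_ev: "psubst \<sigma> = ev pconst \<sigma>"
  by (simp add: fun_eq_iff psubst_def ev_def)

lemma ev_comp: assumes "rhom h" "rhom emb" shows "h (ev emb x p) = ev (h \<circ> emb) (h \<circ> x) p"
  by (simp add: ev_def rhom_sum[OF assms(1)] rhom_mult[OF assms(1)] rhom_prod[OF assms(1)] rhom_power[OF assms(1)])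


fun m2add :: "'a::comm_ring_1 m2 \<Rightarrow> 'a m2 \<Rightarrow> 'a m2" where
  "m2add (a,b,c,d) (e,f,g,h) = (a+e, b+f, c+g, d+h)"
fun m2smul :: "'a::comm_ring_1 \<Rightarrow> 'a m2 \<Rightarrow> 'a m2" where
  "m2smul r (a,b,c,d) = (r*a, r*b, r*c, r*d)"
fun m2map :: "('a \<Rightarrow> 'b) \<Rightarrow> 'a m2 \<Rightarrow> 'b m2" where
  "m2map h (a,b,c,d) = (h a, h b, h c, h d)"
definition m2sc :: "'a::comm_ring_1 \<Rightarrow> 'a m2" where "m2sc r = (r,0,0,r)"

lemma m2map_mul: "rhom h \<Longrightarrow> m2map h (m2mul P Q) = m2mul (m2map h P) (m2map h Q)"
  by (cases P rule: prod_cases4, cases Q rule: prod_cases4) (simp add: rhom_add rhom_mult)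
lemma m2map_id: "rhom h \<Longrightarrow> m2map h m2id = m2id"
  by (simp add: m2id_def rhom_0 rhom_1)
lemma m2map_pow: "rhom h \<Longrightarrow> m2map h (m2pow P k) = m2pow (m2map h P) k"
  by (induct k) (simp_all add: m2map_id m2map_mul)
lemma m2map_adj: "rhom h \<Longrightarrow> m2map h (m2adj P) = m2adj (m2map h P)"
  by (cases P rule: prod_cases4) (simp add: rhom_uminus)
lemma m2map_det: "rhom h \<Longrightarrow> h (m2det P) = m2det (m2map h P)"
  by (cases P rule: prod_cases4) (simp add: rhom_diff rhom_mult)
lemma m2map_tr: "rhom h \<Longrightarrow> h (m2tr P) = m2tr (m2map h P)"
  by (cases P rule: prod_cases4) (simp add: rhom_add)
lemma m2map_relword: "rhom h \<Longrightarrow> m2map h (relword n P Q) = relword n (m2map h P) (m2map h Q)"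
  by (simp add: relword_def m2map_mul m2map_pow m2map_adj)
lemma m2map_list: "m2list (m2map h P) = map h (m2list P)"
  by (cases P rule: prod_cases4) simp

definition Dl :: "'a::comm_ring_1 \<Rightarrow> 'a \<Rightarrow> 'a \<Rightarrow> 'a \<Rightarrow> 'a \<Rightarrow> 'a" where
  "Dl x y z a b = y*((x^2-2*a)*y - x*z) - z*(x*y - 2*z) + (y^2-2*b)*(4*a - x^2)"

definition fval :: "'a::comm_ring_1 m2 \<Rightarrow> 'a m2 \<Rightarrow> 'a" where
  "fval P Q = m2tr Q * Dl (m2tr P) (m2tr Q) (m2tr (m2mul P Q)) (m2det P) (m2det Q)"

lemma rhom_Dl: "rhom h \<Longrightarrow> h (Dl x y z a b) = Dl (h x) (h y) (h z) (h a) (h b)"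
  by (simp add: Dl_def rhom_diff rhom_add rhom_mult rhom_power rhom_of_nat[where k=2, simplified] rhom_of_nat[where k=4, simplified])

lemma rhom_fval: "rhom h \<Longrightarrow> h (fval P Q) = fval (m2map h P) (m2map h Q)"
  by (simp add: fval_def rhom_mult rhom_Dl m2map_tr m2map_det m2map_mul)

definition conjm :: "'a::comm_ring_1 m2 \<Rightarrow> 'a m2 \<Rightarrow> 'a m2" where
  "conjm G P = m2mul G (m2mul P (m2adj G))"

lemma conj_tr: "m2tr (conjm G P) = m2det G * m2tr P"
  unfolding conjm_def
  by (cases P rule: prod_cases4, cases G rule: prod_cases4) (simp add: algebra_simps)
lemma conj_det: "m2det (conjm G P) = m2det G ^ 2 * m2det P"
  unfolding conjm_def
  by (cases P rule: prod_cases4, cases G rule: prod_cases4) (simp add: algebra_simps power2_eq_square)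
lemma conj_tr2: "m2tr (m2mul (conjm G P) (conjm G Q)) = m2det G ^ 2 * m2tr (m2mul P Q)"
  unfolding conjm_def
  by (cases P rule: prod_cases4, cases G rule: prod_cases4, cases Q rule: prod_cases4) (simp add: algebra_simps power2_eq_square)

lemma fval_conj: "m2det G = 1 \<Longrightarrow> fval (conjm G P) (conjm G Q) = fval P Q"
  by (simp add: fval_def conj_tr conj_det conj_tr2)


lemma m2list_nth_eq: "(m2list P ! 0, m2list P ! 1, m2list P ! 2, m2list P ! 3) = P"
  by (cases P rule: prod_cases4) simp

lemma conjsubst_eq: "conjsubst g i = (if i < 4 then m2list (conjm (m2map pconst g) matC) ! i
   else if i < 8 then m2list (conjm (m2map pconst g) matMu) ! (i-4) else pvar i)"
  by (cases g rule: prod_cases4) (simp only: conjsubst_def Let_def conjm_def m2map.simps prod.case)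

lemma conjsubst_C: "m2map (ev pconst (conjsubst g)) matC = conjm (m2map pconst g) matC"
proof -
  define X where "X = conjm (m2map pconst g) matC"
  have "m2map (ev pconst (conjsubst g)) matC = (conjsubst g 0, conjsubst g 1, conjsubst g 2, conjsubst g 3)"
    by (simp add: matC_def ev_pvar rhom_pconst)
  also have "\<dots> = (m2list X ! 0, m2list X ! 1, m2list X ! 2, m2list X ! 3)"
    by (simp add: conjsubst_eq X_def)
  also have "\<dots> = X" by (rule m2list_nth_eq)
  finally show ?thesis by (simp add: X_def)
qed

lemma conjsubst_Mu: "m2map (ev pconst (conjsubst g)) matMu = conjm (m2map pconst g) matMu"
proof -
  define X where "X = conjm (m2map pconst g) matMu"
  have "m2map (ev pconst (conjsubst g)) matMu = (conjsubst g 4, conjsubst g 5, conjsubst g 6, conjsubst g 7)"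
    by (simp add: matMu_def ev_pvar rhom_pconst)
  also have "\<dots> = (m2list X ! 0, m2list X ! 1, m2list X ! 2, m2list X ! 3)"
    by (simp add: conjsubst_eq X_def)
  also have "\<dots> = X" by (rule m2list_nth_eq)
  finally show ?thesis by (simp add: X_def)
qed
definition fpoly :: cpoly where "fpoly = fval matC matMu"

lemma inJ_0: "inJ n 0"
  unfolding inJ_def by (rule exI[of _ "\<lambda>_. 0"]) simp

lemma pconst_1: "pconst 1 = 1" by (simp add: pconst_def)

lemma fpoly_inv: assumes "m2det g = 1" shows "psubst (conjsubst g) fpoly = fpoly"
proof -
  have d: "m2det (m2map pconst g) = 1"
    using m2map_det[OF rhom_pconst, of g] assms pconst_1 by simp
  show ?thesis
    unfolding fpoly_def psubst_ev
    by (simp add: rhom_fval rhom_ev rhom_pconst conjsubst_C conjsubst_Mu fval_conj d)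
qed

lemma inB_fpoly: "inB n fpoly"
  by (simp add: inB_def fpoly_inv inJ_0)

lemma inB_1: "inB n 1"
  by (simp add: inB_def psubst_ev ev_1 rhom_pconst inJ_0)


lemma adj3: "m2pow (m2adj B) 3 = m2add (m2smul ((m2tr B)^2 - m2det B) (m2adj B)) (m2sc (-(m2det B * m2tr B)))"
  by (cases B rule: prod_cases4) (simp add: numeral_3_eq_3 m2sc_def m2id_def algebra_simps power2_eq_square)

lemma WB: "m2mul (m2mul C (m2mul (m2pow (m2adj B) 3) (m2mul C (m2adj B)))) B =
   m2smul (m2det B) (m2add (m2smul (((m2tr B)^2 - m2det B) * m2tr (m2mul C (m2adj B)) - m2det B * m2tr B * m2tr C) C)
     (m2add (m2smul (-(((m2tr B)^2 - m2det B) * m2det C)) B) (m2sc (m2det B * m2tr B * m2det C))))"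
  unfolding adj3
  by (cases C rule: prod_cases4, cases B rule: prod_cases4) (simp add: m2sc_def algebra_simps power2_eq_square)

lemma Dl_ident:
  assumes "M = m2add (m2smul u A) (m2add (m2sc v) (m2smul w B))"
  shows "Dl (m2tr A) (m2tr B) (m2tr (m2mul A B)) (m2det A) (m2det B) * w =
     ((m2tr A ^2 - 2 * m2det A) * m2tr B - m2tr A * m2tr (m2mul A B)) * m2tr M
     - (m2tr A * m2tr B - 2 * m2tr (m2mul A B)) * m2tr (m2mul M A)
     + (4 * m2det A - m2tr A ^ 2) * m2tr (m2mul M B)"
  unfolding assms Dl_def
  by (cases A rule: prod_cases4, cases B rule: prod_cases4) (simp add: m2sc_def algebra_simps power2_eq_square)

fun cab :: "nat \<Rightarrow> 'a::comm_ring_1 \<Rightarrow> 'a \<Rightarrow> 'a \<times> 'a" where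
  "cab 0 x a = (0, 1)"
| "cab (Suc k) x a = (x * fst (cab k x a) + snd (cab k x a), - (a * fst (cab k x a)))"

lemma pow_cab: "m2pow A k = m2add (m2smul (fst (cab k (m2tr A) (m2det A))) A) (m2sc (snd (cab k (m2tr A) (m2det A))))"
proof (induct k)
  case 0 then show ?case by (cases A rule: prod_cases4) (simp add: m2id_def m2sc_def)
next
  case (Suc k)
  show ?case
    by (simp only: m2pow.simps Suc cab.simps, cases A rule: prod_cases4) (simp add: m2sc_def algebra_simps)
qed

lemma det_mul: "m2det (m2mul P Q) = m2det P * m2det Q"
  by (cases P rule: prod_cases4, cases Q rule: prod_cases4) (simp add: algebra_simps)

lemma det_pow: "m2det (m2pow A k) = m2det A ^ k"
  by (induct k) (simp_all add: det_mul m2id_def)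


datatype dual = Dual (re: complex) (du: complex)

lemma dual_eq_iff: "x = y \<longleftrightarrow> re x = re y \<and> du x = du y"
  by (cases x, cases y) simp

instantiation dual :: comm_ring_1
begin
definition "0 = Dual 0 0"
definition "1 = Dual 1 0"
definition "x + y = Dual (re x + re y) (du x + du y)"
definition "x - y = Dual (re x - re y) (du x - du y)"
definition "- x = Dual (- re x) (- du x)"
definition "x * y = Dual (re x * re y) (re x * du y + du x * re y)"
instance
  by standard (simp_all add: dual_eq_iff zero_dual_def one_dual_def plus_dual_def minus_dual_def
      uminus_dual_def times_dual_def algebra_simps)
end

lemma re_simps [simp]: "re 0 = 0" "re 1 = 1" "re (x + y) = re x + re y" "re (x - y) = re x - re y"
  "re (- x) = - re x" "re (x * y) = re x * re y"
  by (simp_all add: zero_dual_def one_dual_def plus_dual_def minus_dual_def uminus_dual_def times_dual_def)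
lemma du_simps [simp]: "du 0 = 0" "du 1 = 0" "du (x + y) = du x + du y" "du (x - y) = du x - du y"
  "du (- x) = - du x" "du (x * y) = re x * du y + du x * re y"
  by (simp_all add: zero_dual_def one_dual_def plus_dual_def minus_dual_def uminus_dual_def times_dual_def)

lemma re_numeral [simp]: "re (numeral k) = numeral k"
  by (induct k) (simp_all only: numeral.simps re_simps)
lemma du_numeral [simp]: "du (numeral k) = 0"
  by (induct k) (simp_all only: numeral.simps du_simps add_0)

definition demb :: "complex \<Rightarrow> dual" where "demb c = Dual c 0"
lemma rhom_demb: "rhom demb"
  by (simp add: rhom_def demb_def dual_eq_iff)
lemma rhom_re: "rhom re" by (simp add: rhom_def)
lemma re_demb [simp]: "re (demb c) = c" and du_demb [simp]: "du (demb c) = 0"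
  by (simp_all add: demb_def)
lemma re_Dual [simp]: "re (Dual a b) = a" and du_Dual [simp]: "du (Dual a b) = b" by simp_all


lemma re_of_nat [simp]: "re (of_nat k) = of_nat k" by (induct k) simp_all
lemma du_of_nat [simp]: "du (of_nat k) = 0" by (induct k) simp_all

lemma pow_raw: "m2mul (m2add (m2smul u A) (m2sc v)) (m2add (m2smul (u*U) (m2mul A P)) (m2smul (K * U * v) P)) =
  m2add (m2add (m2smul (u*(u*U)) (m2mul A (m2mul A P))) (m2smul ((K+1) * (u*U) * v) (m2mul A P))) (m2smul (v*v*K*U) P)"
  by (cases A rule: prod_cases4, cases P rule: prod_cases4) (simp add: m2sc_def algebra_simps)

lemma smul_0: "m2smul 0 P = (0,0,0,0)" by (cases P rule: prod_cases4) simp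
lemma add_00: "m2add P (0,0,0,0) = P" by (cases P rule: prod_cases4) simp

lemma pow_pert:
  fixes u v :: "'a::comm_ring_1"
  assumes vv: "v * v = 0"
  shows "m2pow (m2add (m2smul u A) (m2sc v)) (Suc k) =
     m2add (m2smul (u^(Suc k)) (m2pow A (Suc k))) (m2smul (of_nat (Suc k) * u^k * v) (m2pow A k))"
proof (induct k)
  case 0 show ?case
    by (cases A rule: prod_cases4) (simp add: m2sc_def m2id_def)
next
  case (Suc k)
  have "m2pow (m2add (m2smul u A) (m2sc v)) (Suc (Suc k)) =
      m2mul (m2add (m2smul u A) (m2sc v)) (m2add (m2smul (u*u^k) (m2mul A (m2pow A k))) (m2smul (of_nat (Suc k) * u^k * v) (m2pow A k)))"
    by (simp only: m2pow.simps(2)[of _ "Suc k"] Suc power_Suc m2pow.simps(2)[of A k])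
  also have "\<dots> = m2add (m2smul (u*(u*u^k)) (m2mul A (m2mul A (m2pow A k)))) (m2smul ((of_nat (Suc k)+1) * (u*u^k) * v) (m2mul A (m2pow A k)))"
    by (simp only: pow_raw vv mult_zero_left smul_0 add_00)
  also have "\<dots> = m2add (m2smul (u^(Suc (Suc k))) (m2pow A (Suc (Suc k)))) (m2smul (of_nat (Suc (Suc k)) * u^(Suc k) * v) (m2pow A (Suc k)))"
    by (simp add: algebra_simps)
  finally show ?case .
qed

lemma adj_mul: "m2mul (m2adj A) (m2mul A P) = m2smul (m2det A) P"
  by (cases A rule: prod_cases4, cases P rule: prod_cases4) (simp add: algebra_simps)

lemma pow_pred:
  fixes A :: "complex m2"
  assumes "m2det A = 1" "m2pow A (Suc k) = m2sc c"
  shows "m2pow A k = m2smul c (m2adj A)"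
proof -
  have "m2pow A k = m2mul (m2adj A) (m2mul A (m2pow A k))"
    using adj_mul[of A "m2pow A k"] assms(1) by (cases "m2pow A k" rule: prod_cases4) simp
  also have "\<dots> = m2mul (m2adj A) (m2sc c)" using assms(2) by simp
  also have "\<dots> = m2smul c (m2adj A)"
    by (cases A rule: prod_cases4) (simp add: m2sc_def algebra_simps)
  finally show ?thesis .
qed

lemma u_pow: "Dual 1 t ^ k = Dual 1 (of_nat k * t)"
  by (induct k) (simp_all add: dual_eq_iff one_dual_def algebra_simps)

definition Ad :: "complex m2 \<Rightarrow> dual m2" where
  "Ad A = m2add (m2smul (Dual 1 (2 * m2tr A)) (m2map demb A)) (m2sc (Dual 0 (-4)))"
definition Bd :: "nat \<Rightarrow> complex m2 \<Rightarrow> complex m2 \<Rightarrow> dual m2" where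
  "Bd n A X = m2add (m2map demb X) (m2sc (Dual 0 (of_nat n * m2tr (m2mul A X))))"

lemma det_Ad: assumes "m2det A = 1" shows "m2det (Ad A) = 1"
proof -
  obtain a b c d where A: "A = (a,b,c,d)" by (cases A rule: prod_cases4)
  have h: "a*d - b*c = 1" using assms by (simp add: A)
  show ?thesis unfolding Ad_def A
    using h by (simp add: m2sc_def dual_eq_iff one_dual_def algebra_simps, algebra)
qed

lemma det_Bd: assumes "m2tr X = 0" "m2det X = 1" shows "m2det (Bd n A X) = 1"
proof -
  obtain a b c d where A: "A = (a,b,c,d)" by (cases A rule: prod_cases4)
  obtain x1 x2 x3 x4 where X: "X = (x1,x2,x3,x4)" by (cases X rule: prod_cases4)
  have h: "x1*x4 - x2*x3 = 1" "x1 + x4 = 0" using assms by (simp_all add: X)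
  show ?thesis unfolding Bd_def A X
    using h by (simp add: m2sc_def dual_eq_iff one_dual_def algebra_simps, algebra)
qed

lemma relword_core:
  fixes a1 a2 a3 a4 x1 x2 x3 N :: complex
  assumes c: "c*c = 1" and X: "x1*x1 + x2*x3 = -1"
  defines "x0 \<equiv> a1 + a4"
  defines "z \<equiv> a1*x1 + a2*x3 + a3*x2 - a4*x1"
  defines "Cq \<equiv> (Dual c (2*N*c*(2*a1 - x0)), Dual 0 (2*N*c*(2*a2)), Dual 0 (2*N*c*(2*a3)), Dual c (2*N*c*(2*a4 - x0)))"
  defines "Bq \<equiv> (Dual x1 (N*z), Dual x2 0, Dual x3 0, Dual (-x1) (N*z))"
  shows "m2mul Cq (m2mul (m2pow (m2adj Bq) 3) (m2mul Cq (m2adj Bq))) = m2id"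
  unfolding Cq_def Bq_def
  apply (simp add: m2id_def numeral_3_eq_3 dual_eq_iff one_dual_def zero_dual_def)
  apply (intro conjI)
  using c X by (simp_all add: x0_def z_def algebra_simps, algebra+)

lemma pow_Ad:
  assumes d: "m2det A = 1" and p: "m2pow A (Suc k) = m2sc c" and A: "A = (a1,a2,a3,a4)"
  shows "m2pow (Ad A) (Suc k) = (Dual c (2*of_nat (Suc k)*c*(2*a1 - (a1+a4))), Dual 0 (2*of_nat (Suc k)*c*(2*a2)),
      Dual 0 (2*of_nat (Suc k)*c*(2*a3)), Dual c (2*of_nat (Suc k)*c*(2*a4 - (a1+a4))))"
proof -
  have vv: "Dual 0 (-4) * Dual 0 (-4) = 0" by (simp add: dual_eq_iff zero_dual_def)
  have pk: "m2pow A k = m2smul c (m2adj A)" by (rule pow_pred[OF d p])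
  have "m2pow (Ad A) (Suc k) = m2add (m2smul (Dual 1 (2 * m2tr A) ^ Suc k) (m2map demb (m2pow A (Suc k))))
      (m2smul (of_nat (Suc k) * Dual 1 (2 * m2tr A) ^ k * Dual 0 (- 4)) (m2map demb (m2pow A k)))"
    unfolding Ad_def pow_pert[OF vv] m2map_pow[OF rhom_demb, symmetric] by (rule refl)
  also have "\<dots> = (Dual c (2*of_nat (Suc k)*c*(2*a1 - (a1+a4))), Dual 0 (2*of_nat (Suc k)*c*(2*a2)),
      Dual 0 (2*of_nat (Suc k)*c*(2*a3)), Dual c (2*of_nat (Suc k)*c*(2*a4 - (a1+a4))))"
    unfolding p pk unfolding A u_pow
    by (simp add: m2sc_def dual_eq_iff demb_def algebra_simps)
  finally show ?thesis .
qed


lemma inJ_add: "inJ n p \<Longrightarrow> inJ n q \<Longrightarrow> inJ n (p + q)"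
proof -
  assume "inJ n p" "inJ n q"
  then obtain f g where f: "p = (\<Sum>i<length (relgens n). f i * relgens n ! i)"
    and g: "q = (\<Sum>i<length (relgens n). g i * relgens n ! i)" by (auto simp: inJ_def)
  show ?thesis unfolding inJ_def
    by (rule exI[of _ "\<lambda>i. f i + g i"]) (simp add: f g sum.distrib distrib_right)
qed

lemma inJ_mult: "inJ n p \<Longrightarrow> inJ n (r * p)"
proof -
  assume "inJ n p"
  then obtain f where f: "p = (\<Sum>i<length (relgens n). f i * relgens n ! i)" by (auto simp: inJ_def)
  show ?thesis unfolding inJ_def
    by (rule exI[of _ "\<lambda>i. r * f i"]) (simp add: f sum_distrib_left mult.assoc)
qed

lemma inJ_mult2: "inJ n p \<Longrightarrow> inJ n (p * r)"
  using inJ_mult[of n p r] by (simp add: mult.commute)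

lemma inJ_eq: "inJ n p \<Longrightarrow> t = r * p \<Longrightarrow> inJ n t"
  using inJ_mult by blast

lemma inJ_neg: "inJ n p \<Longrightarrow> inJ n (- p)"
  using inJ_eq[of n p "-p" "-1"] by simp

lemma inJ_diff: "inJ n p \<Longrightarrow> inJ n q \<Longrightarrow> inJ n (p - q)"
  using inJ_add[of n p "-q"] inJ_neg[of n q] by simp

lemma inJ_gen: assumes "i < length (relgens n)" shows "inJ n (relgens n ! i)"
  unfolding inJ_def
proof (rule exI[of _ "\<lambda>j. if j = i then 1 else 0"])
  have "(\<Sum>j<length (relgens n). (if j = i then 1 else 0) * relgens n ! j)
       = (\<Sum>j<length (relgens n). if j = i then relgens n ! j else 0)"
    by (rule sum.cong) auto
  also have "\<dots> = relgens n ! i" using assms by (simp add: sum.delta)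
  finally show "relgens n ! i = (\<Sum>j<length (relgens n). (if j = i then 1 else 0) * relgens n ! j)" by simp
qed

fun mJ :: "nat \<Rightarrow> cpoly m2 \<Rightarrow> bool" where
  "mJ n (a,b,c,d) = (inJ n a \<and> inJ n b \<and> inJ n c \<and> inJ n d)"

lemma mJ_mul_left: "mJ n P \<Longrightarrow> mJ n (m2mul Q P)"
  by (cases P rule: prod_cases4, cases Q rule: prod_cases4) (simp add: inJ_add inJ_mult)
lemma mJ_mul_right: "mJ n P \<Longrightarrow> mJ n (m2mul P Q)"
  by (cases P rule: prod_cases4, cases Q rule: prod_cases4) (simp add: inJ_add inJ_mult2)
lemma mJ_add: "mJ n P \<Longrightarrow> mJ n Q \<Longrightarrow> mJ n (m2add P Q)"
  by (cases P rule: prod_cases4, cases Q rule: prod_cases4) (simp add: inJ_add)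
lemma mJ_smul: "inJ n r \<Longrightarrow> mJ n (m2smul r P)"
  by (cases P rule: prod_cases4) (simp add: inJ_mult mult.commute)
lemma mJ_sc: "inJ n r \<Longrightarrow> mJ n (m2sc r)"
  by (simp add: m2sc_def inJ_0)
lemma mJ_tr: "mJ n P \<Longrightarrow> inJ n (m2tr P)"
  by (cases P rule: prod_cases4) (simp add: inJ_add)

lemma relgens_facts:
  "inJ n (m2det matC - 1)" "inJ n (m2det matMu - 1)"
  "mJ n (m2add (relword n matC matMu) (m2smul (-1) m2id))"
proof -
  obtain w1 w2 w3 w4 where W: "relword n matC matMu = (w1,w2,w3,w4)" by (cases "relword n matC matMu" rule: prod_cases4)
  have R: "relgens n = [m2det matC - 1, m2det matMu - 1, w1 - 1, w2 - 0, w3 - 0, w4 - 1]"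
    by (simp add: relgens_def W m2id_def)
  have g: "\<And>i. i < 6 \<Longrightarrow> inJ n (relgens n ! i)" by (rule inJ_gen) (simp add: R)
  from g[of 0] show "inJ n (m2det matC - 1)" by (simp add: R)
  from g[of 1] show "inJ n (m2det matMu - 1)" by (simp add: R)
  from g[of 2] g[of 3] g[of 4] g[of 5] show "mJ n (m2add (relword n matC matMu) (m2smul (-1) m2id))"
    by (simp add: R W m2id_def)
qed

lemma inJ_pow1: "inJ n (a - 1) \<Longrightarrow> inJ n (a ^ k - 1)"
proof (induct k)
  case 0 then show ?case by (simp add: inJ_0)
next
  case (Suc k)
  have "a ^ Suc k - 1 = a * (a ^ k - 1) + (a - 1)" by (simp add: algebra_simps)
  then show ?case using Suc inJ_add inJ_mult by metis
qed

lemma lin_ident: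
  assumes "RB = m2add (m2smul b (m2add (m2smul s1 C) (m2add (m2smul s2 B) (m2sc s3)))) (m2smul (-1) B)"
    and "C = m2add (m2smul \<alpha> A) (m2sc \<beta>)"
  shows "m2add (m2smul (l*\<alpha>) A) (m2add (m2sc (l*\<beta> + y)) (m2smul (-(y^2)) B)) =
     m2add RB (m2add (m2smul (l - b*s1) C) (m2add (m2smul (-(y^2) - b*s2 + 1) B) (m2sc (y - b*s3))))"
  unfolding assms
  by (cases A rule: prod_cases4, cases B rule: prod_cases4) (simp add: m2sc_def algebra_simps)

lemma RB_ident: "m2mul (m2add W (m2smul (-1) m2id)) B = m2add (m2mul W B) (m2smul (-1) B)"
  by (cases W rule: prod_cases4, cases B rule: prod_cases4) (simp add: m2id_def algebra_simps)

lemma main_inJ: "inJ n (fpoly ^ 2)"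
proof -
  define A where "A = (matC :: cpoly m2)"
  define B where "B = (matMu :: cpoly m2)"
  define C where "C = m2pow A n"
  define x where "x = m2tr A"
  define y where "y = m2tr B"
  define z where "z = m2tr (m2mul A B)"
  define a where "a = m2det A"
  define b where "b = m2det B"
  define dC where "dC = m2det C"
  define \<delta> where "\<delta> = m2tr (m2mul C (m2adj B))"
  define \<gamma> where "\<gamma> = m2tr C"
  define s1 where "s1 = (y^2 - b) * \<delta> - b * y * \<gamma>"
  define s2 where "s2 = - ((y^2 - b) * dC)"
  define s3 where "s3 = b * y * dC"
  define l where "l = (y^2 - 1) * \<delta> - y * \<gamma>"
  define \<alpha> where "\<alpha> = fst (cab n x a)"
  define \<beta> where "\<beta> = snd (cab n x a)"
  define W where "W = relword n A B"
  define R where "R = m2add W (m2smul (-1) m2id)"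
  define RB where "RB = m2mul R B"
  define M where "M = m2add (m2smul (l*\<alpha>) A) (m2add (m2sc (l*\<beta> + y)) (m2smul (-(y^2)) B))"
  have ha: "inJ n (a - 1)" using relgens_facts(1) by (simp add: a_def A_def)
  have hb: "inJ n (b - 1)" using relgens_facts(2) by (simp add: b_def B_def)
  have hR: "mJ n R" using relgens_facts(3) by (simp add: R_def W_def A_def B_def)
  have hdC: "inJ n (dC - 1)" using inJ_pow1[OF ha] by (simp add: dC_def C_def det_pow a_def)
  have Cab: "C = m2add (m2smul \<alpha> A) (m2sc \<beta>)"
    using pow_cab[of A n] by (simp add: C_def \<alpha>_def \<beta>_def x_def a_def)
  have RBe: "RB = m2add (m2smul b (m2add (m2smul s1 C) (m2add (m2smul s2 B) (m2sc s3)))) (m2smul (-1) B)"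
    unfolding RB_def R_def RB_ident W_def relword_def WB
    by (simp add: s1_def s2_def s3_def y_def b_def \<delta>_def \<gamma>_def dC_def C_def)
  have Me: "M = m2add RB (m2add (m2smul (l - b*s1) C) (m2add (m2smul (-(y^2) - b*s2 + 1) B) (m2sc (y - b*s3))))"
    unfolding M_def by (rule lin_ident[OF RBe Cab])
  have e1: "inJ n (l - b*s1)"
    by (rule inJ_eq[OF hb, of _ "\<delta> + y*\<gamma> - s1"]) (simp add: l_def s1_def algebra_simps)
  have e2: "inJ n (-(y^2) - b*s2 + 1)"
  proof -
    have "-(y^2) - b*s2 + 1 = b * (y^2 - b) * (dC - 1) + (y^2 - b - 1) * (b - 1)"
      by (simp add: s2_def algebra_simps)
    then show ?thesis using inJ_add inJ_mult hb hdC by metis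
  qed
  have e3: "inJ n (y - b*s3)"
  proof -
    have "y - b*s3 = (-(y*b^2)) * (dC - 1) + (-(y*(b+1))) * (b - 1)"
      by (simp add: s3_def algebra_simps power2_eq_square)
    then show ?thesis using inJ_add inJ_mult hb hdC by metis
  qed
  have hM: "mJ n M" unfolding Me
    by (intro mJ_add mJ_smul mJ_sc e1 e2 e3) (simp add: RB_def mJ_mul_right hR)
  have t1: "inJ n (m2tr M)" by (rule mJ_tr[OF hM])
  have t2: "inJ n (m2tr (m2mul M A))" by (rule mJ_tr[OF mJ_mul_right[OF hM]])
  have t3: "inJ n (m2tr (m2mul M B))" by (rule mJ_tr[OF mJ_mul_right[OF hM]])
  have DI: "Dl x y z a b * (-(y^2)) =
     ((x ^2 - 2 * a) * y - x * z) * m2tr M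
     - (x * y - 2 * z) * m2tr (m2mul M A)
     + (4 * a - x ^ 2) * m2tr (m2mul M B)"
    using Dl_ident[OF M_def] by (simp add: x_def y_def z_def a_def b_def)
  have "inJ n (Dl x y z a b * (-(y^2)))"
    unfolding DI by (intro inJ_add inJ_diff inJ_mult t1 t2 t3)
  then have "inJ n (Dl x y z a b * (Dl x y z a b * (-(y^2))))" by (rule inJ_mult)
  then have "inJ n (- (fpoly ^ 2))"
    by (simp add: fpoly_def fval_def x_def y_def z_def a_def b_def A_def B_def power2_eq_square mult_ac)
  then show ?thesis using inJ_neg by fastforce
qed


lemma relword_dual:
  assumes d: "m2det A = 1" and p: "m2pow A n = m2sc c" and c: "c*c = 1" and n: "n \<ge> 1"
    and t: "m2tr X = 0" and dX: "m2det X = 1"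
  shows "relword n (Ad A) (Bd n A X) = m2id"
proof -
  obtain k where k: "n = Suc k" using n by (cases n) auto
  obtain a1 a2 a3 a4 where A: "A = (a1,a2,a3,a4)" by (cases A rule: prod_cases4)
  obtain x1 x2 x3 x4 where X: "X = (x1,x2,x3,x4)" by (cases X rule: prod_cases4)
  have x4: "x4 = -x1" using t X by (simp add: eq_neg_iff_add_eq_0 add.commute)
  have e: "x1*x4 - x2*x3 = 1" using dX X by simp
  have hX: "x1*x1 + x2*x3 = -1" using e unfolding x4 by algebra
  have P: "m2pow (Ad A) n = (Dual c (2*of_nat n*c*(2*a1 - (a1+a4))), Dual 0 (2*of_nat n*c*(2*a2)),
      Dual 0 (2*of_nat n*c*(2*a3)), Dual c (2*of_nat n*c*(2*a4 - (a1+a4))))"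
    using pow_Ad[OF d p[unfolded k] A] k by simp
  have B: "Bd n A X = (Dual x1 (of_nat n*(a1*x1 + a2*x3 + a3*x2 - a4*x1)), Dual x2 0, Dual x3 0,
       Dual (-x1) (of_nat n*(a1*x1 + a2*x3 + a3*x2 - a4*x1)))"
    unfolding Bd_def A X x4 by (simp add: m2sc_def demb_def dual_eq_iff algebra_simps)
  show ?thesis unfolding relword_def P B
    by (rule relword_core[OF c hX])
qed

definition xd :: "nat \<Rightarrow> complex m2 \<Rightarrow> complex m2 \<Rightarrow> nat \<Rightarrow> dual" where
  "xd n A X i = (if i < 4 then m2list (Ad A) ! i else if i < 8 then m2list (Bd n A X) ! (i-4) else 0)"

lemma map_C: "m2map (ev demb (xd n A X)) matC = Ad A"
proof -
  have "m2map (ev demb (xd n A X)) matC = (xd n A X 0, xd n A X 1, xd n A X 2, xd n A X 3)"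
    by (simp add: matC_def ev_pvar rhom_demb)
  also have "\<dots> = (m2list (Ad A) ! 0, m2list (Ad A) ! 1, m2list (Ad A) ! 2, m2list (Ad A) ! 3)"
    by (simp add: xd_def)
  also have "\<dots> = Ad A" by (rule m2list_nth_eq)
  finally show ?thesis .
qed

lemma map_Mu: "m2map (ev demb (xd n A X)) matMu = Bd n A X"
proof -
  have "m2map (ev demb (xd n A X)) matMu = (xd n A X 4, xd n A X 5, xd n A X 6, xd n A X 7)"
    by (simp add: matMu_def ev_pvar rhom_demb)
  also have "\<dots> = (m2list (Bd n A X) ! 0, m2list (Bd n A X) ! 1, m2list (Bd n A X) ! 2, m2list (Bd n A X) ! 3)"
    by (simp add: xd_def)
  also have "\<dots> = Bd n A X" by (rule m2list_nth_eq)
  finally show ?thesis .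
qed

lemma hom_kills_J:
  assumes h: "rhom h" and h1: "h (m2det matC - 1) = 0" and h2: "h (m2det matMu - 1) = 0"
    and h3: "m2map h (relword n matC matMu) = m2id" and J: "inJ n p"
  shows "h p = 0"
proof -
  obtain w1 w2 w3 w4 where W: "relword n matC matMu = (w1,w2,w3,w4)" by (cases "relword n matC matMu" rule: prod_cases4)
  have R: "relgens n = [m2det matC - 1, m2det matMu - 1, w1 - 1, w2 - 0, w3 - 0, w4 - 1]"
    by (simp add: relgens_def W m2id_def)
  have hw: "h w1 = 1" "h w2 = 0" "h w3 = 0" "h w4 = 1" using h3 W by (simp_all add: m2id_def)
  have z: "\<And>i. i < length (relgens n) \<Longrightarrow> h (relgens n ! i) = 0"
  proof -
    fix i assume "i < length (relgens n)"
    then have "i < 6" by (simp add: R)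
    then have "i = 0 \<or> i = 1 \<or> i = 2 \<or> i = 3 \<or> i = 4 \<or> i = 5" by auto
    then show "h (relgens n ! i) = 0"
      using h1 h2 hw by (auto simp: R rhom_diff[OF h] rhom_1[OF h] rhom_0[OF h])
  qed
  obtain q where q: "p = (\<Sum>i<length (relgens n). q i * relgens n ! i)" using J by (auto simp: inJ_def)
  show ?thesis unfolding q by (simp add: rhom_sum[OF h] rhom_mult[OF h] z)
qed

lemma re_Ad: "m2map re (Ad A) = A"
  unfolding Ad_def by (cases A rule: prod_cases4) (simp add: m2sc_def)
lemma re_Bd: "m2map re (Bd n A X) = X"
  unfolding Bd_def by (cases X rule: prod_cases4) (simp add: m2sc_def)

lemma re_list: "i < 4 \<Longrightarrow> re (m2list P ! i) = m2list (m2map re P) ! i"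
  by (cases P rule: prod_cases4) (auto simp: m2map_list less_Suc_eq numeral_eq_Suc)

lemma re_xd: "re \<circ> xd n A X = coords A X"
proof
  fix i show "(re \<circ> xd n A X) i = coords A X i"
    by (simp add: xd_def coords_def re_list re_Ad re_Bd)
qed

lemma re_ev: "re (ev demb (xd n A X) p) = peval (coords A X) p"
proof -
  have "re \<circ> demb = id" by (simp add: fun_eq_iff)
  then show ?thesis by (simp add: ev_comp[OF rhom_re rhom_demb] re_xd peval_ev)
qed

lemma tr_Bd: "re (m2tr (Bd n A X)) = m2tr X" "du (m2tr (Bd n A X)) = 2 * of_nat n * m2tr (m2mul A X)"
  unfolding Bd_def by (cases X rule: prod_cases4, simp add: m2sc_def)+

lemma key:
  assumes d: "m2det A = 1" and p: "m2pow A n = m2sc c" and c: "c*c = 1" and n: "n \<ge> 1"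
    and t: "m2tr X = 0" and dX: "m2det X = 1" and J: "inJ n (s * fpoly)"
  shows "peval (coords A X) s * (2 * of_nat n * m2tr (m2mul A X) * Dl (m2tr A) 0 (m2tr (m2mul A X)) 1 1) = 0"
proof -
  let ?h = "ev demb (xd n A X)"
  have h: "rhom ?h" by (rule rhom_ev[OF rhom_demb])
  have dA: "m2det (Ad A) = 1" by (rule det_Ad[OF d])
  have dB: "m2det (Bd n A X) = 1" by (rule det_Bd[OF t dX])
  have h1: "?h (m2det matC - 1) = 0"
    by (simp add: rhom_diff[OF h] rhom_1[OF h] m2map_det[OF h] map_C dA)
  have h2: "?h (m2det matMu - 1) = 0"
    by (simp add: rhom_diff[OF h] rhom_1[OF h] m2map_det[OF h] map_Mu dB)
  have h3: "m2map ?h (relword n matC matMu) = m2id"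
    by (simp add: m2map_relword[OF h] map_C map_Mu relword_dual[OF d p c n t dX])
  have z: "?h (s * fpoly) = 0" by (rule hom_kills_J[OF h h1 h2 h3 J])
  have F: "?h fpoly = fval (Ad A) (Bd n A X)"
    by (simp add: fpoly_def rhom_fval[OF h] map_C map_Mu)
  have reDl: "re (Dl (m2tr (Ad A)) (m2tr (Bd n A X)) (m2tr (m2mul (Ad A) (Bd n A X))) (m2det (Ad A)) (m2det (Bd n A X)))
      = Dl (m2tr A) 0 (m2tr (m2mul A X)) 1 1"
    by (simp add: rhom_Dl[OF rhom_re] m2map_tr[OF rhom_re] m2map_mul[OF rhom_re] re_Ad re_Bd t dA dB)
  have "du (?h (s * fpoly)) = re (?h s) * (2 * of_nat n * m2tr (m2mul A X) * Dl (m2tr A) 0 (m2tr (m2mul A X)) 1 1)"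
    by (simp add: rhom_mult[OF h] F fval_def tr_Bd t reDl)
  then show ?thesis using z by (simp add: re_ev)
qed


lemma cheb_step:
  fixes a1 a2 a3 a4 \<mu> \<nu> P Q :: complex
  assumes h1: "a1*a4 - a2*a3 = 1" and h2: "a1 + a4 = \<mu> + \<nu>" and h3: "\<mu>*\<nu> = 1"
  shows "m2mul (a1,a2,a3,a4) (m2add (m2smul (P - Q) (a1,a2,a3,a4)) (m2sc (\<mu>*Q - \<nu>*P))) =
     m2add (m2smul (\<mu>*P - \<nu>*Q) (a1,a2,a3,a4)) (m2sc (\<mu>*(\<nu>*Q) - \<nu>*(\<mu>*P)))"
  using h1 h2 h3 by (simp add: m2sc_def, intro conjI; algebra)

lemma smul_mul_comm: "m2smul r (m2mul A P) = m2mul A (m2smul r P)"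
  by (cases A rule: prod_cases4, cases P rule: prod_cases4) (simp add: algebra_simps)

lemma cheb:
  fixes a1 a2 a3 a4 \<mu> \<nu> :: complex
  assumes h1: "a1*a4 - a2*a3 = 1" and h2: "a1 + a4 = \<mu> + \<nu>" and h3: "\<mu>*\<nu> = 1"
  shows "m2smul (\<mu> - \<nu>) (m2pow (a1,a2,a3,a4) k) = m2add (m2smul (\<mu>^k - \<nu>^k) (a1,a2,a3,a4)) (m2sc (\<mu>*\<nu>^k - \<nu>*\<mu>^k))"
proof (induct k)
  case 0 show ?case by (simp add: m2sc_def m2id_def)
next
  case (Suc k)
  show ?case
    by (simp only: m2pow.simps(2) smul_mul_comm Suc cheb_step[OF h1 h2 h3] power_Suc)
qed

lemma pow_scalar:
  fixes A :: "complex m2" and \<mu> \<nu> :: complex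
  assumes d: "m2det A = 1" and t: "m2tr A = \<mu> + \<nu>" and h3: "\<mu>*\<nu> = 1" and ne: "\<mu> \<noteq> \<nu>"
    and pm: "\<mu>^n = c" and pn: "\<nu>^n = c"
  shows "m2pow A n = m2sc c"
proof -
  obtain a1 a2 a3 a4 where A: "A = (a1,a2,a3,a4)" by (cases A rule: prod_cases4)
  have h1: "a1*a4 - a2*a3 = 1" and h2: "a1 + a4 = \<mu> + \<nu>" using d t by (simp_all add: A)
  have e: "m2smul (\<mu> - \<nu>) (m2pow A n) = m2sc ((\<mu> - \<nu>) * c)"
    unfolding A cheb[OF h1 h2 h3] pm pn by (simp add: m2sc_def algebra_simps)
  have ne': "\<mu> - \<nu> \<noteq> 0" using ne by simp
  obtain p1 p2 p3 p4 where P: "m2pow A n = (p1,p2,p3,p4)" by (cases "m2pow A n" rule: prod_cases4)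
  show ?thesis using e ne' unfolding P by (simp add: m2sc_def)
qed


lemma ev_ne0: "eventually (\<lambda>m::complex. m \<noteq> 0) (at 0)"
  by (simp add: eventually_at_filter)

lemma ev_pow_mult:
  fixes g :: "complex \<Rightarrow> complex"
  assumes "(g \<longlongrightarrow> c) (at 0)" "c \<noteq> 0"
  shows "eventually (\<lambda>m. m^j * g m \<noteq> 0) (at 0)"
proof -
  have "eventually (\<lambda>m. g m \<noteq> 0) (at 0)" by (rule tendsto_imp_eventually_ne[OF assms])
  then show ?thesis using ev_ne0 by eventually_elim simp
qed

lemma ev_poly5:
  fixes c0 c1 c2 c3 c4 :: complex
  assumes "c0 \<noteq> 0 \<or> (c0 = 0 \<and> c1 \<noteq> 0) \<or> (c0 = 0 \<and> c1 = 0 \<and> c2 \<noteq> 0)"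
  shows "eventually (\<lambda>m. c0 + c1*m + c2*m^2 + c3*m^3 + c4*m^4 \<noteq> 0) (at 0)"
proof -
  consider "c0 \<noteq> 0" | "c0 = 0" "c1 \<noteq> 0" | "c0 = 0" "c1 = 0" "c2 \<noteq> 0" using assms by blast
  then show ?thesis
  proof cases
    case 1
    have "((\<lambda>m. c0 + c1*m + c2*m^2 + c3*m^3 + c4*m^4) \<longlongrightarrow> c0 + c1*0 + c2*0^2 + c3*0^3 + c4*0^4) (at 0)"
      by (intro tendsto_intros)
    then have "((\<lambda>m. c0 + c1*m + c2*m^2 + c3*m^3 + c4*m^4) \<longlongrightarrow> c0) (at 0)" by simp
    from ev_pow_mult[OF this 1(1), of 0] show ?thesis by simp
  next
    case 2
    have "((\<lambda>m. c1 + c2*m + c3*m^2 + c4*m^3) \<longlongrightarrow> c1 + c2*0 + c3*0^2 + c4*0^3) (at 0)"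
      by (intro tendsto_intros)
    then have "((\<lambda>m. c1 + c2*m + c3*m^2 + c4*m^3) \<longlongrightarrow> c1) (at 0)" by simp
    from ev_pow_mult[OF this 2(2), of 1] show ?thesis
      by (simp add: 2(1) algebra_simps power2_eq_square power3_eq_cube power4_eq_xxxx)
  next
    case 3
    have "((\<lambda>m. c2 + c3*m + c4*m^2) \<longlongrightarrow> c2 + c3*0 + c4*0^2) (at 0)"
      by (intro tendsto_intros)
    then have "((\<lambda>m. c2 + c3*m + c4*m^2) \<longlongrightarrow> c2) (at 0)" by simp
    from ev_pow_mult[OF this 3(3), of 2] show ?thesis
      by (simp add: 3(1,2) algebra_simps power2_eq_square power3_eq_cube power4_eq_xxxx)
  qed
qed

lemma peval_tendsto:
  assumes "\<And>i. ((\<lambda>m. x m i) \<longlongrightarrow> x0 i) F"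
  shows "((\<lambda>m. peval (x m) p) \<longlongrightarrow> peval x0 p) F"
  unfolding peval_def by (intro tendsto_intros assms)

lemma tr_lin: "m2tr (m2mul A (m2add (m2smul a B) (m2smul b Y))) = a * m2tr (m2mul A B) + b * m2tr (m2mul A Y)"
  by (cases A rule: prod_cases4, cases B rule: prod_cases4, cases Y rule: prod_cases4) (simp add: algebra_simps)
lemma tr_lin0: "m2tr (m2add (m2smul a B) (m2smul b Y)) = a * m2tr B + b * m2tr Y"
  by (cases B rule: prod_cases4, cases Y rule: prod_cases4) (simp add: algebra_simps)
lemma det_lin: assumes "m2tr B = 0" "m2tr Y = 0"
  shows "m2det (m2add (m2smul a B) (m2smul b Y)) = a^2 * m2det B + b^2 * m2det Y - a*b*m2tr (m2mul B Y)"
proof -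
  obtain b1 b2 b3 b4 where B: "B = (b1,b2,b3,b4)" by (cases B rule: prod_cases4)
  obtain y1 y2 y3 y4 where Y: "Y = (y1,y2,y3,y4)" by (cases Y rule: prod_cases4)
  have "b4 = -b1" "y4 = -y1" using assms B Y by (simp_all add: eq_neg_iff_add_eq_0 add.commute)
  then show ?thesis unfolding B Y by (simp add: algebra_simps power2_eq_square)
qed
lemma list_lin: "j < 4 \<Longrightarrow> m2list (m2add (m2smul a B) (m2smul b Y)) ! j = a * (m2list B ! j) + b * (m2list Y ! j)"
  by (cases B rule: prod_cases4, cases Y rule: prod_cases4) (auto simp: less_Suc_eq numeral_eq_Suc)

lemma family:
  fixes A B Y :: "complex m2" and s :: cpoly
  assumes tB: "m2tr B = 0" and dB: "m2det B = 1" and tY: "m2tr Y = 0" and oBY: "m2tr (m2mul B Y) = 0"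
    and r2: "4 - (m2tr A)^2 \<noteq> 0"
    and cond1: "m2tr (m2mul A B) = 0 \<Longrightarrow> m2tr (m2mul A Y) \<noteq> 0"
    and cond2: "4 - (m2tr A)^2 - (m2tr (m2mul A B))^2 = 0 \<Longrightarrow> m2tr (m2mul A Y) \<noteq> 0 \<or> m2det Y \<noteq> 0"
    and ps: "peval (coords A B) s \<noteq> 0"
  shows "\<exists>X. m2tr X = 0 \<and> m2det X = 1 \<and> peval (coords A X) s \<noteq> 0 \<and> m2tr (m2mul A X) \<noteq> 0
            \<and> 4 - (m2tr A)^2 - (m2tr (m2mul A X))^2 \<noteq> 0"
proof -
  define q where "q = - m2det Y"
  define z0 where "z0 = m2tr (m2mul A B)"
  define w where "w = m2tr (m2mul A Y)"
  define r where "r = 4 - (m2tr A)^2"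
  define den where "den m = 1 - q*m^2" for m :: complex
  define a where "a m = (1 + q*m^2) / den m" for m
  define b where "b m = 2*m / den m" for m
  define X where "X m = m2add (m2smul (a m) B) (m2smul (b m) Y)" for m
  define N where "N m = (1 + q*m^2) * z0 + 2*m*w" for m
  have den0: "(den \<longlongrightarrow> 1) (at 0)"
  proof -
    have "((\<lambda>m. 1 - q*m^2) \<longlongrightarrow> 1 - q*0^2) (at 0)" by (intro tendsto_intros)
    then show ?thesis by (simp add: den_def[abs_def])
  qed
  have a0: "(a \<longlongrightarrow> 1) (at 0)"
  proof -
    have "((\<lambda>m. (1 + q*m^2) / den m) \<longlongrightarrow> (1 + q*0^2) / 1) (at 0)"
      by (intro tendsto_intros den0) simp
    then show ?thesis by (simp add: a_def[abs_def])
  qed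
  have b0: "(b \<longlongrightarrow> 0) (at 0)"
  proof -
    have "((\<lambda>m. 2*m / den m) \<longlongrightarrow> 2*0 / 1) (at 0)"
      by (intro tendsto_intros den0) simp
    then show ?thesis by (simp add: b_def[abs_def])
  qed
  have ent: "\<And>j. j < 4 \<Longrightarrow> ((\<lambda>m. m2list (X m) ! j) \<longlongrightarrow> m2list B ! j) (at 0)"
  proof -
    fix j :: nat assume j: "j < 4"
    have "((\<lambda>m. a m * (m2list B ! j) + b m * (m2list Y ! j)) \<longlongrightarrow> 1 * (m2list B ! j) + 0 * (m2list Y ! j)) (at 0)"
      by (intro tendsto_intros a0 b0)
    then show "((\<lambda>m. m2list (X m) ! j) \<longlongrightarrow> m2list B ! j) (at 0)"
      by (simp add: X_def list_lin[OF j])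
  qed
  have co: "\<And>i. ((\<lambda>m. coords A (X m) i) \<longlongrightarrow> coords A B i) (at 0)"
  proof -
    fix i :: nat
    show "((\<lambda>m. coords A (X m) i) \<longlongrightarrow> coords A B i) (at 0)"
    proof (cases "i < 4")
      case True then show ?thesis by (simp add: coords_def)
    next
      case False
      show ?thesis
      proof (cases "i < 8")
        case True
        then have "i - 4 < 4" by simp
        then show ?thesis using False True ent by (simp add: coords_def)
      next
        case False then show ?thesis using \<open>\<not> i < 4\<close> by (simp add: coords_def)
      qed
    qed
  qed
  have E1: "eventually (\<lambda>m. den m \<noteq> 0) (at 0)"
    by (rule tendsto_imp_eventually_ne[OF den0]) simp
  have E2: "eventually (\<lambda>m. peval (coords A (X m)) s \<noteq> 0) (at 0)"
    by (rule tendsto_imp_eventually_ne[OF peval_tendsto[OF co] ps])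
  have E3: "eventually (\<lambda>m. N m \<noteq> 0) (at 0)"
  proof -
    have "eventually (\<lambda>m. z0 + (2*w)*m + (q*z0)*m^2 + 0*m^3 + 0*m^4 \<noteq> 0) (at 0)"
      by (rule ev_poly5) (use cond1 in \<open>auto simp: z0_def w_def\<close>)
    then show ?thesis by eventually_elim (simp add: N_def algebra_simps)
  qed
  have E4: "eventually (\<lambda>m. r * (den m)^2 - (N m)^2 \<noteq> 0) (at 0)"
  proof -
    have "eventually (\<lambda>m. (r - z0^2) + (-4*z0*w)*m + (-2*q*r - 4*w^2 - 2*q*z0^2)*m^2
          + (-4*q*z0*w)*m^3 + (q^2*(r - z0^2))*m^4 \<noteq> 0) (at 0)"
    proof (rule ev_poly5)
      show "r - z0^2 \<noteq> 0 \<or> (r - z0^2 = 0 \<and> -4*z0*w \<noteq> 0) \<or>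
          (r - z0^2 = 0 \<and> -4*z0*w = 0 \<and> -2*q*r - 4*w^2 - 2*q*z0^2 \<noteq> 0)"
      proof (cases "r - z0^2 = 0")
        case False then show ?thesis by simp
      next
        case True
        have z0ne: "z0 \<noteq> 0" using True r2 by (auto simp: r_def)
        have rz: "r = z0^2" using True by simp
        from cond2 True have "w \<noteq> 0 \<or> q \<noteq> 0" by (auto simp: r_def z0_def w_def q_def)
        then show ?thesis
        proof
          assume "w \<noteq> 0" then show ?thesis using True z0ne by simp
        next
          assume qn: "q \<noteq> 0"
          have "-2*q*r - 4*w^2 - 2*q*z0^2 = -4*q*z0^2 - 4*w^2" using rz by (simp add: algebra_simps)
          then show ?thesis using True z0ne qn by auto
        qed
      qed
    qed
    then show ?thesis by eventually_elim (simp add: N_def den_def algebra_simps power2_eq_square power3_eq_cube power4_eq_xxxx)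
  qed
  have "eventually (\<lambda>m. den m \<noteq> 0 \<and> peval (coords A (X m)) s \<noteq> 0 \<and> N m \<noteq> 0 \<and> r * (den m)^2 - (N m)^2 \<noteq> 0) (at 0)"
    using E1 E2 E3 E4 by eventually_elim simp
  then obtain m where m: "den m \<noteq> 0" "peval (coords A (X m)) s \<noteq> 0" "N m \<noteq> 0" "r * (den m)^2 - (N m)^2 \<noteq> 0"
    using eventually_happens'[OF at_neq_bot] by blast
  have trX: "m2tr (X m) = 0" by (simp add: X_def tr_lin0 tB tY)
  have detX: "m2det (X m) = 1"
  proof -
    have "m2det (X m) = (a m)^2 - q * (b m)^2"
      by (simp add: X_def det_lin[OF tB tY] dB oBY q_def)
    also have "\<dots> = ((1 + q*m^2)^2 - q*(2*m)^2) / (den m)^2"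
      by (simp add: a_def b_def power_divide diff_divide_distrib)
    also have "\<dots> = (den m)^2 / (den m)^2" by (simp add: den_def algebra_simps power2_eq_square)
    also have "\<dots> = 1" using m(1) by simp
    finally show ?thesis .
  qed
  have zX: "m2tr (m2mul A (X m)) = N m / den m"
    by (simp add: X_def tr_lin a_def b_def N_def z0_def w_def add_divide_distrib algebra_simps)
  have zne: "m2tr (m2mul A (X m)) \<noteq> 0" using m(1,3) zX by simp
  have "4 - (m2tr A)^2 - (m2tr (m2mul A (X m)))^2 = (r * (den m)^2 - (N m)^2) / (den m)^2"
    using m(1) by (simp add: zX r_def power_divide field_simps)
  then have Dne: "4 - (m2tr A)^2 - (m2tr (m2mul A (X m)))^2 \<noteq> 0" using m(1,4) by simp
  show ?thesis using trX detX m(2) zne Dne by blast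
qed

lemma choose_Y:
  fixes A B :: "complex m2"
  assumes tB: "m2tr B = 0" and dB: "m2det B = 1" and dA: "m2det A = 1"
  shows "\<exists>Y. m2tr Y = 0 \<and> m2tr (m2mul B Y) = 0 \<and>
    (m2tr (m2mul A B) = 0 \<longrightarrow> 4 - (m2tr A)^2 \<noteq> 0 \<longrightarrow> m2tr (m2mul A Y) \<noteq> 0) \<and>
    (4 - (m2tr A)^2 - (m2tr (m2mul A B))^2 = 0 \<longrightarrow> 4 - (m2tr A)^2 \<noteq> 0 \<longrightarrow> m2tr (m2mul A Y) \<noteq> 0 \<or> m2det Y \<noteq> 0)"
proof -
  obtain a1 a2 a3 a4 where A: "A = (a1,a2,a3,a4)" by (cases A rule: prod_cases4)
  obtain b1 b2 b3 b4 where B: "B = (b1,b2,b3,b4)" by (cases B rule: prod_cases4)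
  have b4: "b4 = -b1" using tB B by (simp add: eq_neg_iff_add_eq_0 add.commute)
  have hB: "-(b1*b1) - b2*b3 = 1" using dB B b4 by simp
  have hA: "a1*a4 - a2*a3 = 1" using dA A by simp
  define x0 where "x0 = a1 + a4"
  define z0 where "z0 = m2tr (m2mul A B)"
  show ?thesis
  proof (cases "4 - x0^2 - z0^2 = 0")
    case False
    define Y where "Y = m2add (m2add A (m2sc (-x0/2))) (m2smul (z0/2) B)"
    have "m2tr Y = 0" by (simp add: Y_def A B b4 m2sc_def x0_def)
    moreover have "m2tr (m2mul B Y) = 0"
      unfolding Y_def z0_def A B b4 m2sc_def using hB by (simp add: field_simps, algebra)
    moreover have "m2tr (m2mul A Y) = -(4 - x0^2 - z0^2)/2"
      unfolding Y_def z0_def A B b4 m2sc_def x0_def using hA by (simp add: field_simps, algebra)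
    ultimately have Y1: "m2tr Y = 0" "m2tr (m2mul B Y) = 0" "m2tr (m2mul A Y) = -(4 - x0^2 - z0^2)/2" by auto
    have w: "m2tr (m2mul A Y) \<noteq> 0"
    proof
      assume "m2tr (m2mul A Y) = 0"
      then have "4 - x0^2 - z0^2 = 0" using Y1(3) by simp
      then show False using False by simp
    qed
    have D: "4 - (m2tr A)^2 - (m2tr (m2mul A B))^2 \<noteq> 0" using False by (simp add: x0_def z0_def A)
    show ?thesis using Y1(1,2) w D by (intro exI[of _ Y]) blast
  next
    case True
    have "\<exists>Y. m2tr Y = 0 \<and> m2tr (m2mul B Y) = 0 \<and> m2det Y \<noteq> 0"
    proof (cases "b2 = 0")
      case False
      show ?thesis by (rule exI[of _ "(b2, 0, -2*b1, -b2)"]) (simp add: B b4 False algebra_simps)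
    next
      case b2: True
      show ?thesis
      proof (cases "b3 = 0")
        case False
        show ?thesis by (rule exI[of _ "(b3, -2*b1, 0, -b3)"]) (simp add: B b4 False algebra_simps)
      next
        case True
        show ?thesis by (rule exI[of _ "(0, 1, 1, 0)"]) (simp add: B b4 True b2)
      qed
    qed
    then obtain Y where Y: "m2tr Y = 0" "m2tr (m2mul B Y) = 0" "m2det Y \<noteq> 0" by blast
    have "m2tr (m2mul A B) \<noteq> 0 \<or> 4 - (m2tr A)^2 = 0"
      using True by (auto simp: z0_def x0_def A)
    then show ?thesis using Y by (intro exI[of _ Y]) blast
  qed
qed


lemma Dl_val: "Dl x0 0 z 1 1 = -2 * (4 - x0^2 - z^2)"
  by (simp add: Dl_def algebra_simps power2_eq_square)

theorem mainTheorem16: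
  fixes n k :: nat
  assumes "n \<ge> 2" and "1 \<le> k" and "k \<le> n - 1"
  shows "\<forall>A B. is_rep n A B \<and> m2tr B = 0
           \<and> m2tr A = complex_of_real (2 * cos (pi * real k / real n))
           \<longrightarrow> nonreduced_at n A B"
proof (intro allI impI)
  fix A B :: "complex m2"
  assume H: "is_rep n A B \<and> m2tr B = 0 \<and> m2tr A = complex_of_real (2 * cos (pi * real k / real n))"
  have dA: "m2det A = 1" and dB: "m2det B = 1" and tB: "m2tr B = 0"
    and tA: "m2tr A = complex_of_real (2 * cos (pi * real k / real n))"
    using H by (auto simp: is_rep_def)
  define \<theta> where "\<theta> = pi * real k / real n"
  have npos: "real n > 0" using assms by simp
  have th0: "0 < \<theta>" using assms npos by (simp add: \<theta>_def)
  have "real k < real n" using assms by linarith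
  then have thpi: "\<theta> < pi" using npos by (simp add: \<theta>_def field_simps)
  have sinpos: "sin \<theta> > 0" by (rule sin_gt_zero[OF th0 thpi])
  define \<mu> where "\<mu> = cis \<theta>"
  define \<nu> where "\<nu> = cis (-\<theta>)"
  define c :: complex where "c = (-1)^k"
  have sum: "m2tr A = \<mu> + \<nu>"
    by (simp add: tA \<mu>_def \<nu>_def complex_eq_iff \<theta>_def[symmetric])
  have prod: "\<mu> * \<nu> = 1" by (simp add: \<mu>_def \<nu>_def cis_mult)
  have ne: "\<mu> \<noteq> \<nu>"
  proof
    assume "\<mu> = \<nu>"
    then have "Im \<mu> = Im \<nu>" by simp
    then have "sin \<theta> = - sin \<theta>" by (simp add: \<mu>_def \<nu>_def)
    then show False using sinpos by simp
  qed
  have nth: "real n * \<theta> = real k * pi" using npos by (simp add: \<theta>_def field_simps)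
  have pm: "\<mu> ^ n = c"
    unfolding \<mu>_def DeMoivre nth c_def by (simp add: complex_eq_iff cos_npi sin_npi)
  have pn: "\<nu> ^ n = c"
  proof -
    have "real n * - \<theta> = - (real k * pi)" using nth by simp
    then show ?thesis unfolding \<nu>_def DeMoivre c_def by (simp add: complex_eq_iff cos_npi sin_npi)
  qed
  have cc: "c * c = 1" by (simp add: c_def power_mult_distrib[symmetric])
  have pA: "m2pow A n = m2sc c" by (rule pow_scalar[OF dA sum prod ne pm pn])
  have n1: "n \<ge> 1" using assms by simp
  have r2: "4 - (m2tr A)^2 \<noteq> 0"
  proof -
    have re: "4 - (2 * cos \<theta>)^2 = 4 * (sin \<theta>)^2"
      by (simp add: sin_squared_eq power_mult_distrib algebra_simps)
    have "4 - (m2tr A)^2 = complex_of_real (4 - (2 * cos \<theta>)^2)"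
      by (simp add: tA \<theta>_def[symmetric])
    also have "\<dots> = complex_of_real (4 * (sin \<theta>)^2)" by (simp only: re)
    finally have "4 - (m2tr A)^2 = complex_of_real (4 * (sin \<theta>)^2)" .
    then show ?thesis using sinpos by simp
  qed
  show "nonreduced_at n A B"
    unfolding nonreduced_at_def
  proof (intro exI[of _ fpoly] conjI allI impI)
    show "inB n fpoly" by (rule inB_fpoly)
  next
    fix s assume s: "inB n s \<and> \<not> in_maxideal n A B s"
    show "\<not> inJ n (s * fpoly)"
    proof
      assume J: "inJ n (s * fpoly)"
      have ps: "peval (coords A B) s \<noteq> 0" using s by (simp add: in_maxideal_def)
      obtain Y where Y: "m2tr Y = 0" "m2tr (m2mul B Y) = 0"
        "m2tr (m2mul A B) = 0 \<longrightarrow> 4 - (m2tr A)^2 \<noteq> 0 \<longrightarrow> m2tr (m2mul A Y) \<noteq> 0"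
        "4 - (m2tr A)^2 - (m2tr (m2mul A B))^2 = 0 \<longrightarrow> 4 - (m2tr A)^2 \<noteq> 0 \<longrightarrow> m2tr (m2mul A Y) \<noteq> 0 \<or> m2det Y \<noteq> 0"
        using choose_Y[OF tB dB dA] by blast
      obtain X where X: "m2tr X = 0" "m2det X = 1" "peval (coords A X) s \<noteq> 0" "m2tr (m2mul A X) \<noteq> 0"
          "4 - (m2tr A)^2 - (m2tr (m2mul A X))^2 \<noteq> 0"
        using family[OF tB dB Y(1) Y(2) r2 _ _ ps] Y(3,4) r2 by blast
      have eq: "peval (coords A X) s * (2 * of_nat n * m2tr (m2mul A X) * Dl (m2tr A) 0 (m2tr (m2mul A X)) 1 1) = 0"
        by (rule key[OF dA pA cc n1 X(1) X(2) J])
      have D: "Dl (m2tr A) 0 (m2tr (m2mul A X)) 1 1 \<noteq> 0" unfolding Dl_val by (rule no_zero_divisors) (simp, rule X(5))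
      have N: "(of_nat n :: complex) \<noteq> 0" using n1 by simp
      show False using eq X(3) X(4) D N by (simp only: mult_eq_0_iff) simp
    qed
  next
    show "\<exists>N s. inB n s \<and> \<not> in_maxideal n A B s \<and> inJ n (s * fpoly ^ N)"
    proof -
      have a: "inB n 1" by (rule inB_1)
      have b: "\<not> in_maxideal n A B 1" by (simp add: in_maxideal_def peval_ev ev_1[OF rhom_id])
      have c: "inJ n (1 * fpoly ^ 2)" using main_inJ by simp
      show ?thesis using a b c by blast
    qed
  qed
qed


end
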